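(* Let $R$ be a semifield, $\phi:\underline n\to\underline m$ a surjective map of sets, $(X_j)_{j\in\underline m}$ and $(Y_i)_{i\in\underline n}$ families of $R$-convex sets, and for each $j\in\underline m$ let $f_j:\prod_{i\in\phi^{-1}(j)}Y_i\to X_j$ be a $|\phi^{-1}(j)|$-convex map. Then there is a unique convex map $F:\bigotimes_{i\in\underline n}Y_i\to\bigotimes_{j\in\underline m}X_j$ such that $F\circ U_{(Y_i)}=U_{(X_j)}\circ\prod_jf_j$, where $\prod_jf_j:\prod_{i\in\underline n}Y_i\to\prod_{j\in\underline m}X_j$ sends $(y_i)_i$ to $(f_j((y_i)_{i\in\phi^{-1}(j)}))_j$.
   Context: A semifield is a commutative semiring in which every nonzero element is invertible. $D_R$ is the monad on $\mathsf{Set}$ of finitely supported $R$-valued distributions summing to $1$; $R$-convex sets are $D_R$-algebras, convex maps are algebra maps. $\underline n=\{1,\dots,n\}$. A map $\prod_{i\in S}A_i\to Z$ from a product of convex sets is $|S|$-convex if it is convex in each variable separately. $\bigotimes_{i\in\underline n}Y_i$ is the quotient of $D_R(\prod_iY_i)$ by the smallest convex equivalence relation containing $1\bullet(\sum_{k_i}\alpha^i_{k_i}y^i_{k_i})_{i}\sim\sum_{(k_1,\dots,k_n)}\alpha^1_{k_1}\cdots\alpha^n_{k_n}\bullet(y^1_{k_1},\dots,y^n_{k_n})$; $U_{(Y_i)}:\prod_iY_i\to\bigotimes_iY_i$ sends $(y_1,\dots,y_n)$ to $y_1\otimes\cdots\otimes y_n$, the class of $1\bullet(y_1,\dots,y_n)$.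 This map is $n$-convex and every $n$-convex map out of $\prod_iY_i$ factors uniquely through it by a convex map. *)

theory Defs
  imports "HOL-Library.FuncSet"
begin

definition supp :: "('a \<Rightarrow> 'r::zero) \<Rightarrow> 'a set" where
  "supp p = {x. p x \<noteq> 0}"

definition fsdist :: "'a set \<Rightarrow> ('a \<Rightarrow> 'r::comm_semiring_1) set" where
  "fsdist X = {p. finite (supp p) \<and> supp p \<subseteq> X \<and> sum p (supp p) = 1}"

definition delta :: "'a \<Rightarrow> ('a \<Rightarrow> 'r::comm_semiring_1)" where
  "delta x = (\<lambda>y. if y = x then 1 else 0)"

definition Dmap :: "('a \<Rightarrow> 'b) \<Rightarrow> ('a \<Rightarrow> 'r::comm_semiring_1) \<Rightarrow> ('b \<Rightarrow> 'r)" where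
  "Dmap f p = (\<lambda>y. sum p {x \<in> supp p. f x = y})"

definition Dmult :: "(('a \<Rightarrow> 'r::comm_semiring_1) \<Rightarrow> 'r) \<Rightarrow> ('a \<Rightarrow> 'r)" where
  "Dmult P = (\<lambda>x. sum (\<lambda>q. P q * q x) (supp P))"

definition convex_set :: "'a set \<Rightarrow> (('a \<Rightarrow> 'r::comm_semiring_1) \<Rightarrow> 'a) \<Rightarrow> bool" where
  "convex_set X a \<longleftrightarrow>
     (\<forall>p\<in>fsdist X. a p \<in> X) \<and>
     (\<forall>x\<in>X. a (delta x) = x) \<and>
     (\<forall>P\<in>fsdist (fsdist X). a (Dmap a P) = a (Dmult P))"

definition convex_map :: "'a set \<Rightarrow> (('a \<Rightarrow> 'r::comm_semiring_1) \<Rightarrow> 'a)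
     \<Rightarrow> 'b set \<Rightarrow> (('b \<Rightarrow> 'r) \<Rightarrow> 'b) \<Rightarrow> ('a \<Rightarrow> 'b) \<Rightarrow> bool" where
  "convex_map X a Z b f \<longleftrightarrow>
     (\<forall>x\<in>X. f x \<in> Z) \<and> (\<forall>p\<in>fsdist X. f (a p) = b (Dmap f p))"

definition multiconvex :: "'i set \<Rightarrow> ('i \<Rightarrow> 'b set) \<Rightarrow> ('i \<Rightarrow> ('b \<Rightarrow> 'r::comm_semiring_1) \<Rightarrow> 'b)
     \<Rightarrow> 'a set \<Rightarrow> (('a \<Rightarrow> 'r) \<Rightarrow> 'a) \<Rightarrow> (('i \<Rightarrow> 'b) \<Rightarrow> 'a) \<Rightarrow> bool" where
  "multiconvex I Y alg Z b f \<longleftrightarrow>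
     (\<forall>y\<in>PiE I Y. f y \<in> Z) \<and>
     (\<forall>i\<in>I. \<forall>y\<in>PiE I Y. convex_map (Y i) (alg i) Z b (\<lambda>t. f (y(i := t))))"

definition convex_equiv :: "'a set \<Rightarrow> (('a \<Rightarrow> 'r::comm_semiring_1) \<Rightarrow> 'a) \<Rightarrow> ('a \<times> 'a) set \<Rightarrow> bool" where
  "convex_equiv A a E \<longleftrightarrow> equiv A E \<and>
     (\<forall>p\<in>fsdist E. (a (Dmap fst p), a (Dmap snd p)) \<in> E)"

definition quot_alg :: "('a \<times> 'a) set \<Rightarrow> (('a \<Rightarrow> 'r::comm_semiring_1) \<Rightarrow> 'a)
     \<Rightarrow> (('a set \<Rightarrow> 'r) \<Rightarrow> 'a set)" where
  "quot_alg E a Q = E `` {a (Dmap (\<lambda>c. SOME x. x \<in> c) Q)}"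

definition prod_dist :: "'i set \<Rightarrow> ('i \<Rightarrow> 'b \<Rightarrow> 'r::comm_semiring_1) \<Rightarrow> ('i \<Rightarrow> 'b) \<Rightarrow> 'r" where
  "prod_dist I p = (\<lambda>y. if y \<in> extensional I then (\<Prod>i\<in>I. p i (y i)) else 0)"

text \<open>Generating relation:
  1\<bullet>(\<Sum>_k \<alpha>^i_k y^i_k)_i  ~  \<Sum>_{(k_i)} \<alpha>^1_{k_1}\<cdots>\<alpha>^n_{k_n}\<bullet>(y^1_{k_1},...,y^n_{k_n}).\<close>
definition tensor_gen :: "'i set \<Rightarrow> ('i \<Rightarrow> 'b set) \<Rightarrow> ('i \<Rightarrow> ('b \<Rightarrow> 'r::comm_semiring_1) \<Rightarrow> 'b)
     \<Rightarrow> ((('i \<Rightarrow> 'b) \<Rightarrow> 'r) \<times> (('i \<Rightarrow> 'b) \<Rightarrow> 'r)) set" where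
  "tensor_gen I Y alg =
     {(delta (\<lambda>i\<in>I. alg i (p i)), prod_dist I p) | p. \<forall>i\<in>I. p i \<in> fsdist (Y i)}"

definition tensor_rel :: "'i set \<Rightarrow> ('i \<Rightarrow> 'b set) \<Rightarrow> ('i \<Rightarrow> ('b \<Rightarrow> 'r::comm_semiring_1) \<Rightarrow> 'b)
     \<Rightarrow> ((('i \<Rightarrow> 'b) \<Rightarrow> 'r) \<times> (('i \<Rightarrow> 'b) \<Rightarrow> 'r)) set" where
  "tensor_rel I Y alg =
     \<Inter>{E. convex_equiv (fsdist (PiE I Y)) Dmult E \<and> tensor_gen I Y alg \<subseteq> E}"

definition tensor_carrier :: "'i set \<Rightarrow> ('i \<Rightarrow> 'b set) \<Rightarrow> ('i \<Rightarrow> ('b \<Rightarrow> 'r::comm_semiring_1) \<Rightarrow> 'b)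
     \<Rightarrow> (('i \<Rightarrow> 'b) \<Rightarrow> 'r) set set" where
  "tensor_carrier I Y alg = fsdist (PiE I Y) // tensor_rel I Y alg"

definition tensor_alg :: "'i set \<Rightarrow> ('i \<Rightarrow> 'b set) \<Rightarrow> ('i \<Rightarrow> ('b \<Rightarrow> 'r::comm_semiring_1) \<Rightarrow> 'b)
     \<Rightarrow> (((('i \<Rightarrow> 'b) \<Rightarrow> 'r) set \<Rightarrow> 'r) \<Rightarrow> (('i \<Rightarrow> 'b) \<Rightarrow> 'r) set)" where
  "tensor_alg I Y alg = quot_alg (tensor_rel I Y alg) Dmult"

text \<open>U_{(Y_i)}: (y_i)_i \<mapsto> y_1 \<otimes> ... \<otimes> y_n, the class of 1\<bullet>(y_1,...,y_n).\<close>
definition tensor_unit :: "'i set \<Rightarrow> ('i \<Rightarrow> 'b set) \<Rightarrow> ('i \<Rightarrow> ('b \<Rightarrow> 'r::comm_semiring_1) \<Rightarrow> 'b)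
     \<Rightarrow> ('i \<Rightarrow> 'b) \<Rightarrow> (('i \<Rightarrow> 'b) \<Rightarrow> 'r) set" where
  "tensor_unit I Y alg y = tensor_rel I Y alg `` {delta y}"

end

theory Submission
  imports Defs
begin

definition pairD :: "('a \<Rightarrow> 'r::comm_semiring_1) \<Rightarrow> ('b \<Rightarrow> 'r) \<Rightarrow> ('a \<times> 'b \<Rightarrow> 'r)" where
  "pairD P q = (\<lambda>(z,t). P z * q t)"

lemma supp_iff: "x \<in> supp p \<longleftrightarrow> p x \<noteq> 0" by (simp add: supp_def)

lemma sum_supp_filter:
  assumes "finite S" "supp p \<subseteq> S"
  shows "sum p {x\<in>supp p. P x} = sum p {x\<in>S. P x}"
  by (rule sum.mono_neutral_left) (use assms in \<open>auto simp: supp_def\<close>)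

lemma sum_supp_superset:
  assumes "finite S" "supp p \<subseteq> S"
  shows "sum p (supp p) = sum p S"
  by (rule sum.mono_neutral_left) (use assms in \<open>auto simp: supp_def\<close>)

lemma Dmap_alt:
  assumes "finite S" "supp p \<subseteq> S"
  shows "Dmap f p y = sum p {x\<in>S. f x = y}"
  unfolding Dmap_def using sum_supp_filter[OF assms] by simp

lemma Dmap_alt_if:
  assumes "finite S" "supp p \<subseteq> S"
  shows "Dmap f p y = (\<Sum>x\<in>S. if f x = y then p x else 0)"
  unfolding Dmap_alt[OF assms] using sum.inter_filter[OF assms(1)] by simp

lemma supp_Dmap: "supp (Dmap f p) \<subseteq> f ` supp p"
proof
  fix y assume y: "y \<in> supp (Dmap f p)"
  show "y \<in> f ` supp p"
  proof (rule ccontr)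
    assume "y \<notin> f ` supp p"
    then have e: "{x\<in>supp p. f x = y} = {}" by blast
    have "Dmap f p y = 0" unfolding Dmap_def e by simp
    then show False using y by (simp add: supp_def)
  qed
qed

lemma finite_supp_Dmap: "finite (supp p) \<Longrightarrow> finite (supp (Dmap f p))"
  by (rule finite_subset[OF supp_Dmap]) simp

lemma sum_Dmap:
  assumes "finite (supp p)" "finite T" "f ` supp p \<subseteq> T"
  shows "sum (Dmap f p) T = sum p (supp p)"
  unfolding Dmap_def using sum.group[OF assms, of p] by simp

lemma Dmap_fsdist:
  assumes "finite (supp p)" "sum p (supp p) = 1" "\<forall>x\<in>supp p. f x \<in> Z"
  shows "Dmap f p \<in> fsdist Z"
proof -
  have "sum (Dmap f p) (supp (Dmap f p)) = sum (Dmap f p) (f ` supp p)"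
    by (rule sum_supp_superset) (use assms supp_Dmap[of f p] in auto)
  also have "\<dots> = 1" using sum_Dmap[OF assms(1), of "f ` supp p" f] assms by simp
  finally show ?thesis unfolding fsdist_def
    using assms supp_Dmap[of f p] finite_supp_Dmap[OF assms(1)] by blast
qed

lemma fsdist_finite: "p \<in> fsdist X \<Longrightarrow> finite (supp p)" by (simp add: fsdist_def)
lemma fsdist_sum: "p \<in> fsdist X \<Longrightarrow> sum p (supp p) = 1" by (simp add: fsdist_def)
lemma fsdist_supp: "p \<in> fsdist X \<Longrightarrow> supp p \<subseteq> X" by (simp add: fsdist_def)
lemma fsdist_self: "p \<in> fsdist X \<Longrightarrow> p \<in> fsdist (supp p)" by (simp add: fsdist_def)

lemma Dmap_fsdist2:
  assumes "p \<in> fsdist X" "\<forall>x\<in>X. f x \<in> Z"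
  shows "Dmap f p \<in> fsdist Z"
  using Dmap_fsdist[of p f Z] assms fsdist_finite fsdist_sum fsdist_supp by blast

lemma Dmap_cong:
  assumes "\<forall>x\<in>supp p. f x = g x"
  shows "Dmap f p = Dmap g p"
  unfolding Dmap_def using assms by (intro ext sum.cong) auto

lemma Dmap_comp:
  assumes fin: "finite (supp p)"
  shows "Dmap f (Dmap g p) = Dmap (f \<circ> g) p"
proof
  fix z
  have "Dmap f (Dmap g p) z = sum (Dmap g p) {y\<in>g ` supp p. f y = z}"
    by (rule Dmap_alt) (use fin supp_Dmap[of g p] in auto)
  also have "\<dots> = (\<Sum>y\<in>{y\<in>g ` supp p. f y = z}. sum p {x. x \<in> {x\<in>supp p. f (g x) = z} \<and> g x = y})"
    by (intro sum.cong refl) (auto simp: Dmap_def intro!: sum.cong)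
  also have "\<dots> = sum p {x\<in>supp p. f (g x) = z}"
    by (rule sum.group) (use fin in auto)
  finally show "Dmap f (Dmap g p) z = Dmap (f \<circ> g) p z" by (simp add: Dmap_def)
qed

lemma supp_delta: "supp (delta x) \<subseteq> {x}"
  by (auto simp: supp_def delta_def)

lemma Dmap_delta: "Dmap f (delta x) = delta (f x)"
proof
  fix y
  have "Dmap f (delta x) y = sum (delta x) {x'\<in>{x}. f x' = y}"
    by (rule Dmap_alt) (use supp_delta[of x] in auto)
  also have "{x'\<in>{x}. f x' = y} = (if f x = y then {x} else {})" by auto
  also have "sum (delta x) (if f x = y then {x} else {}) = (if f x = y then 1 else 0)"
    by (simp add: delta_def)
  finally show "Dmap f (delta x) y = delta (f x) y"
    by (auto simp add: delta_def)
qed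

lemma delta_fsdist: "x \<in> X \<Longrightarrow> delta x \<in> fsdist X"
  unfolding fsdist_def using sum_supp_superset[of "{x}" "delta x"] supp_delta[of x]
  by (auto intro: finite_subset simp: delta_def)

lemma supp_Dmult: "supp (Dmult P) \<subseteq> \<Union> (supp ` supp P)"
proof
  fix x assume x: "x \<in> supp (Dmult P)"
  show "x \<in> \<Union> (supp ` supp P)"
  proof (rule ccontr)
    assume "x \<notin> \<Union> (supp ` supp P)"
    then have "\<forall>q\<in>supp P. q x = 0" by (auto simp: supp_def)
    then have "Dmult P x = 0" unfolding Dmult_def by (intro sum.neutral) auto
    then show False using x by (simp add: supp_def)
  qed
qed

lemma Dmult_alt:
  assumes "finite S" "supp P \<subseteq> S"
  shows "Dmult P x = (\<Sum>q\<in>S. P q * q x)"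
  unfolding Dmult_def by (rule sum.mono_neutral_left) (use assms in \<open>auto simp: supp_def\<close>)

lemma Dmult_fsdist:
  assumes P: "P \<in> fsdist (fsdist X)"
  shows "Dmult P \<in> fsdist X"
proof -
  let ?U = "\<Union> (supp ` supp P)"
  have finP: "finite (supp P)" using P fsdist_finite by blast
  have fq: "\<forall>q\<in>supp P. q \<in> fsdist X" using fsdist_supp[OF P] by blast
  have finU: "finite ?U" using finP fq by (auto simp: fsdist_def)
  have UX: "?U \<subseteq> X" using fq by (auto simp: fsdist_def)
  have "sum (Dmult P) (supp (Dmult P)) = sum (Dmult P) ?U"
    by (rule sum_supp_superset[OF finU supp_Dmult])
  also have "\<dots> = (\<Sum>x\<in>?U. \<Sum>q\<in>supp P. P q * q x)"
    by (simp add: Dmult_def)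
  also have "\<dots> = (\<Sum>q\<in>supp P. P q * sum q ?U)"
    by (subst sum.swap) (simp add: sum_distrib_left)
  also have "\<dots> = (\<Sum>q\<in>supp P. P q)"
  proof (intro sum.cong refl)
    fix q assume q: "q \<in> supp P"
    have "sum q ?U = sum q (supp q)"
      by (rule sum_supp_superset[symmetric]) (use finU q in auto)
    also have "\<dots> = 1" using fq q fsdist_sum by blast
    finally show "P q * sum q ?U = P q" by simp
  qed
  also have "\<dots> = 1" using P fsdist_sum by blast
  finally have s1: "sum (Dmult P) (supp (Dmult P)) = 1" .
  moreover have "finite (supp (Dmult P))" using finite_subset[OF supp_Dmult finU] .
  moreover have "supp (Dmult P) \<subseteq> X" using supp_Dmult[of P] UX by (rule order_trans)
  ultimately show ?thesis unfolding fsdist_def by blast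
qed

lemma Dmult_Dmap:
  assumes fin: "finite (supp p)"
  shows "Dmult (Dmap k p) x = (\<Sum>y\<in>supp p. p y * k y x)"
proof -
  have "Dmult (Dmap k p) x = (\<Sum>q\<in>k ` supp p. Dmap k p q * q x)"
    by (rule Dmult_alt) (use fin supp_Dmap[of k p] in auto)
  also have "\<dots> = (\<Sum>q\<in>k ` supp p. \<Sum>y\<in>{y. y \<in> supp p \<and> k y = q}. p y * k y x)"
    by (intro sum.cong refl) (auto simp: Dmap_def sum_distrib_right intro!: sum.cong)
  also have "\<dots> = (\<Sum>y\<in>supp p. p y * k y x)"
    by (rule sum.group) (use fin in auto)
  finally show ?thesis .
qed

lemma Dmult_Dmap_delta:
  assumes fin: "finite (supp p)"
  shows "Dmult (Dmap delta p) = p"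
proof
  fix x
  have "Dmult (Dmap delta p) x = (\<Sum>y\<in>supp p. p y * delta y x)" by (rule Dmult_Dmap[OF fin])
  also have "\<dots> = (\<Sum>y\<in>supp p. if y = x then p y else 0)"
    by (intro sum.cong refl) (auto simp: delta_def)
  also have "\<dots> = p x" using fin by (auto simp: supp_def)
  finally show "Dmult (Dmap delta p) x = p x" .
qed

lemma Dmap_Dmult:
  assumes finP: "finite (supp P)" and fq: "\<forall>q\<in>supp P. finite (supp q)"
  shows "Dmap g (Dmult P) = Dmult (Dmap (Dmap g) P)"
proof
  fix z
  let ?U = "\<Union> (supp ` supp P)"
  have finU: "finite ?U" using finP fq by auto
  have "Dmap g (Dmult P) z = sum (Dmult P) {x\<in>?U. g x = z}"
    by (rule Dmap_alt[OF finU supp_Dmult])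
  also have "\<dots> = (\<Sum>x\<in>{x\<in>?U. g x = z}. \<Sum>q\<in>supp P. P q * q x)"
    by (simp add: Dmult_def)
  also have "\<dots> = (\<Sum>q\<in>supp P. P q * sum q {x\<in>?U. g x = z})"
    by (subst sum.swap) (simp add: sum_distrib_left)
  also have "\<dots> = (\<Sum>q\<in>supp P. P q * Dmap g q z)"
  proof (intro sum.cong refl)
    fix q assume q: "q \<in> supp P"
    have "Dmap g q z = sum q {x\<in>?U. g x = z}"
      by (rule Dmap_alt) (use finU q in auto)
    then show "P q * sum q {x\<in>?U. g x = z} = P q * Dmap g q z" by simp
  qed
  also have "\<dots> = Dmult (Dmap (Dmap g) P) z"
    by (rule Dmult_Dmap[OF finP, symmetric])
  finally show "Dmap g (Dmult P) z = Dmult (Dmap (Dmap g) P) z" .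
qed


lemma supp_pairD: "supp (pairD P q) \<subseteq> supp P \<times> supp q"
  by (auto simp: supp_def pairD_def)

lemma pairD_fsdist:
  assumes "P \<in> fsdist A" "q \<in> fsdist B"
  shows "pairD P q \<in> fsdist (A \<times> B)"
proof -
  have fin: "finite (supp P \<times> supp q)" using assms by (simp add: fsdist_def)
  have "sum (pairD P q) (supp (pairD P q)) = sum (pairD P q) (supp P \<times> supp q)"
    by (rule sum_supp_superset[OF fin supp_pairD])
  also have "\<dots> = (\<Sum>z\<in>supp P. \<Sum>t\<in>supp q. P z * q t)"
    by (simp add: sum.cartesian_product pairD_def)
  also have "\<dots> = sum P (supp P) * sum q (supp q)" by (simp add: sum_product)
  also have "\<dots> = 1" using assms by (simp add: fsdist_def)
  finally have s1: "sum (pairD P q) (supp (pairD P q)) = 1" .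
  have "supp (pairD P q) \<subseteq> A \<times> B" using supp_pairD[of P q] assms by (auto simp: fsdist_def)
  then show ?thesis unfolding fsdist_def using s1 finite_subset[OF supp_pairD fin] by blast
qed

lemma Dmult_Dmap_pair:
  assumes fP: "finite (supp P)" and fq: "finite (supp q)"
  shows "Dmult (Dmap (\<lambda>z. Dmap (H z) q) P) = Dmap (\<lambda>(z,t). H z t) (pairD P q)"
proof
  fix w
  have "Dmult (Dmap (\<lambda>z. Dmap (H z) q) P) w = (\<Sum>z\<in>supp P. P z * Dmap (H z) q w)"
    by (rule Dmult_Dmap[OF fP])
  also have "\<dots> = (\<Sum>z\<in>supp P. P z * (\<Sum>t\<in>supp q. if H z t = w then q t else 0))"
    by (intro sum.cong refl arg_cong2[where f="(*)"] Dmap_alt_if) (use fq in auto)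
  also have "\<dots> = (\<Sum>z\<in>supp P. \<Sum>t\<in>supp q. if H z t = w then pairD P q (z,t) else 0)"
    by (simp add: sum_distrib_left pairD_def if_distrib cong: if_cong)
  also have "\<dots> = (\<Sum>(z,t)\<in>supp P \<times> supp q. if H z t = w then pairD P q (z,t) else 0)"
    by (rule sum.cartesian_product)
  also have "\<dots> = (\<Sum>x\<in>supp P \<times> supp q. if (\<lambda>(z,t). H z t) x = w then pairD P q x else 0)"
    by (intro sum.cong refl) auto
  also have "\<dots> = Dmap (\<lambda>(z,t). H z t) (pairD P q) w"
    by (rule Dmap_alt_if[symmetric]) (use fP fq supp_pairD[of P q] in auto)
  finally show "Dmult (Dmap (\<lambda>z. Dmap (H z) q) P) w = Dmap (\<lambda>(z,t). H z t) (pairD P q) w" .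
qed

lemma Dmap_inj:
  assumes "supp p \<subseteq> S" "inj_on f S" "x \<in> S"
  shows "Dmap f p (f x) = p x"
proof -
  have "{x'\<in>supp p. f x' = f x} = (if x \<in> supp p then {x} else {})"
    using assms by (auto dest: inj_onD)
  then show ?thesis unfolding Dmap_def by (auto simp: supp_def)
qed

lemma Dmap_notin:
  assumes "supp p \<subseteq> S" "y \<notin> f ` S"
  shows "Dmap f p y = 0"
proof -
  have e: "{x'\<in>supp p. f x' = y} = {}" using assms by auto
  show ?thesis unfolding Dmap_def e by simp
qed

lemma supp_prod_dist_ext: "supp (prod_dist I p) \<subseteq> extensional I"
  by (auto simp: supp_def prod_dist_def)

lemma supp_prod_dist:
  assumes "finite I"
  shows "supp (prod_dist I p) \<subseteq> PiE I (\<lambda>i. supp (p i))"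
proof
  fix y assume y: "y \<in> supp (prod_dist I p)"
  then have ext: "y \<in> extensional I" and pr: "(\<Prod>i\<in>I. p i (y i)) \<noteq> 0"
    by (auto simp: supp_def prod_dist_def split: if_splits)
  have "\<forall>i\<in>I. p i (y i) \<noteq> 0"
  proof
    fix i assume "i \<in> I"
    show "p i (y i) \<noteq> 0"
    proof
      assume "p i (y i) = 0"
      then have "(\<Prod>i\<in>I. p i (y i)) = 0" using assms \<open>i \<in> I\<close> by (intro prod_zero) auto
      then show False using pr by simp
    qed
  qed
  then show "y \<in> PiE I (\<lambda>i. supp (p i))" using ext by (auto simp: PiE_def supp_def)
qed

lemma prod_dist_fsdist:
  assumes fI: "finite I" and p: "\<forall>i\<in>I. p i \<in> fsdist (Y i)"
  shows "prod_dist I p \<in> fsdist (PiE I Y)"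
proof -
  let ?S = "PiE I (\<lambda>i. supp (p i))"
  have finS: "finite ?S" using fI p by (intro finite_PiE) (auto simp: fsdist_def)
  have "sum (prod_dist I p) (supp (prod_dist I p)) = sum (prod_dist I p) ?S"
    by (rule sum_supp_superset[OF finS supp_prod_dist[OF fI]])
  also have "\<dots> = (\<Sum>y\<in>?S. \<Prod>i\<in>I. p i (y i))"
    by (intro sum.cong refl) (auto simp: prod_dist_def PiE_def)
  also have "\<dots> = (\<Prod>i\<in>I. \<Sum>x\<in>supp (p i). p i x)"
    by (rule prod_sum_PiE[symmetric]) (use fI p in \<open>auto simp: fsdist_def\<close>)
  also have "\<dots> = 1" using p by (simp add: fsdist_def)
  finally have s1: "sum (prod_dist I p) (supp (prod_dist I p)) = 1" .
  have "?S \<subseteq> PiE I Y" using p by (auto simp: PiE_def Pi_def fsdist_def)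
  then show ?thesis unfolding fsdist_def
    using s1 finite_subset[OF supp_prod_dist[OF fI] finS] supp_prod_dist[OF fI, of p] by blast
qed

lemma prod_dist_empty: "prod_dist {} p = delta (\<lambda>i. undefined)"
  by (rule ext) (auto simp: prod_dist_def delta_def extensional_def fun_eq_iff)

lemma prod_dist_insert:
  assumes fT: "finite T" and aT: "a \<notin> T"
  shows "prod_dist (insert a T) p = Dmap (\<lambda>(z,t). z(a:=t)) (pairD (prod_dist T p) (p a))"
proof
  fix w
  let ?S = "extensional T \<times> (UNIV :: 'b set)"
  let ?f = "\<lambda>(z::'a \<Rightarrow> 'b, t). z(a:=t)"
  have suppS: "supp (pairD (prod_dist T p) (p a)) \<subseteq> ?S"
    using supp_pairD[of "prod_dist T p" "p a"] supp_prod_dist_ext[of T p] by auto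
  have inj: "inj_on ?f ?S"
  proof (rule inj_onI, clarsimp)
    fix z t z' t'
    assume z: "z \<in> extensional T" and z': "z' \<in> extensional T" and eq: "z(a := t) = z'(a := t')"
    have "t = t'" using fun_cong[OF eq, of a] by simp
    moreover have "z = z'"
    proof
      fix i show "z i = z' i"
        using fun_cong[OF eq, of i] z z' aT by (cases "i = a") (auto simp: extensional_def)
    qed
    ultimately show "z = z' \<and> t = t'" by simp
  qed
  show "prod_dist (insert a T) p w = Dmap ?f (pairD (prod_dist T p) (p a)) w"
  proof (cases "w \<in> extensional (insert a T)")
    case True
    have wr: "w(a:=undefined) \<in> extensional T" using True by (auto simp: extensional_def)
    have pc: "(\<Prod>i\<in>T. p i ((w(a:=undefined)) i)) = (\<Prod>i\<in>T. p i (w i))"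
      using aT by (intro prod.cong) auto
    have "w = ?f (w(a:=undefined), w a)" by simp
    then have "Dmap ?f (pairD (prod_dist T p) (p a)) w
        = Dmap ?f (pairD (prod_dist T p) (p a)) (?f (w(a:=undefined), w a))" by simp
    also have "\<dots> = pairD (prod_dist T p) (p a) (w(a:=undefined), w a)"
      by (rule Dmap_inj[OF suppS inj]) (use wr in auto)
    also have "\<dots> = (\<Prod>i\<in>T. p i (w i)) * p a (w a)"
      using wr pc by (simp add: pairD_def prod_dist_def)
    also have "\<dots> = prod_dist (insert a T) p w"
      using True fT aT by (simp add: prod_dist_def mult.commute)
    finally show ?thesis by simp
  next
    case False
    have "w \<notin> ?f ` ?S" using False by (auto simp: extensional_def)
    then have "Dmap ?f (pairD (prod_dist T p) (p a)) w = 0" by (rule Dmap_notin[OF suppS])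
    then show ?thesis using False by (simp add: prod_dist_def)
  qed
qed


lemma PiE_upd_mem: "y \<in> PiE S Y \<Longrightarrow> a \<in> S \<Longrightarrow> v \<in> Y a \<Longrightarrow> y(a := v) \<in> PiE S Y"
  by (auto simp: PiE_def Pi_def extensional_def)

lemma convex_set_mem: "convex_set X a \<Longrightarrow> p \<in> fsdist X \<Longrightarrow> a p \<in> X"
  by (simp add: convex_set_def)

lemma multi_expand:
  assumes fS: "finite S"
    and Yc: "\<forall>i\<in>S. convex_set (Y i) (alg i)"
    and h: "multiconvex S Y alg Z b h"
    and Zc: "convex_set Z b"
    and p: "\<forall>i\<in>S. p i \<in> fsdist (Y i)"
    and TS: "T \<subseteq> S"
  shows "\<forall>y\<in>PiE S Y. h (\<lambda>i\<in>S. if i\<in>T then alg i (p i) else y i)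
           = b (Dmap (\<lambda>z. h (\<lambda>i\<in>S. if i\<in>T then z i else y i)) (prod_dist T p))"
proof -
  have hZ: "\<forall>y\<in>PiE S Y. h y \<in> Z" and hc: "\<forall>i\<in>S. \<forall>y\<in>PiE S Y. convex_map (Y i) (alg i) Z b (\<lambda>t. h (y(i := t)))"
    using h by (auto simp: multiconvex_def)
  have "finite T" using finite_subset[OF TS fS] .
  then show ?thesis using TS
  proof (induction T rule: finite_induct)
    case empty
    show ?case
    proof
      fix y assume y: "y \<in> PiE S Y"
      have r: "(\<lambda>i\<in>S. if i\<in>{} then alg i (p i) else y i) = y"
        using y by (auto simp: PiE_def extensional_def)
      have r2: "(\<lambda>z. h (\<lambda>i\<in>S. if i\<in>{} then z i else y i)) = (\<lambda>z. h y)"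
        using r by simp
      show "h (\<lambda>i\<in>S. if i\<in>{} then alg i (p i) else y i)
           = b (Dmap (\<lambda>z. h (\<lambda>i\<in>S. if i\<in>{} then z i else y i)) (prod_dist {} p))"
        unfolding r r2 prod_dist_empty Dmap_delta
        using Zc hZ y by (simp add: convex_set_def)
    qed
  next
    case (insert a T)
    have aS: "a \<in> S" and TS': "T \<subseteq> S" using insert.prems by auto
    note IH = insert.IH[OF TS']
    let ?PT = "prod_dist T p"
    have PT: "?PT \<in> fsdist (PiE T Y)" using prod_dist_fsdist[of T p Y] insert.hyps(1) p TS' by auto
    have pa: "p a \<in> fsdist (Y a)" using p aS by auto
    show ?case
    proof
      fix y assume y: "y \<in> PiE S Y"
      define y' where "y' = y(a := alg a (p a))"
      have y': "y' \<in> PiE S Y" unfolding y'_def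
        by (rule PiE_upd_mem[OF y aS convex_set_mem]) (use Yc aS pa in auto)
      define w where "w z = (\<lambda>i\<in>S. if i\<in>T then z i else y i)" for z
      define K where "K z = Dmap (\<lambda>t. h ((w z)(a:=t))) (p a)" for z
      have wmem: "w z \<in> PiE S Y" if "z \<in> PiE T Y" for z
        using that y TS' by (auto simp: w_def PiE_def Pi_def)
      have suppPT: "supp ?PT \<subseteq> PiE T Y"
        using PT by (simp add: fsdist_def)
      have eq1: "(\<lambda>i\<in>S. if i\<in>insert a T then alg i (p i) else y i) = (\<lambda>i\<in>S. if i\<in>T then alg i (p i) else y' i)"
        using insert.hyps(2) by (auto simp: y'_def)
      have step: "h (\<lambda>i\<in>S. if i\<in>T then z i else y' i) = b (K z)" if z: "z \<in> supp ?PT" for z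
      proof -
        have zY: "z \<in> PiE T Y" using z suppPT by auto
        have e: "(\<lambda>i\<in>S. if i\<in>T then z i else y' i) = (w z)(a := alg a (p a))"
          using insert.hyps(2) aS by (auto simp: y'_def w_def)
        have "convex_map (Y a) (alg a) Z b (\<lambda>t. h ((w z)(a := t)))"
          using hc aS wmem[OF zY] by blast
        then have "h ((w z)(a := alg a (p a))) = b (K z)"
          using pa unfolding convex_map_def K_def by blast
        then show ?thesis using e by simp
      qed
      have Kmem: "K z \<in> fsdist Z" if z: "z \<in> supp ?PT" for z
      proof -
        have zY: "z \<in> PiE T Y" using z suppPT by auto
        show ?thesis unfolding K_def
          by (rule Dmap_fsdist2[OF pa]) (use hZ PiE_upd_mem[OF wmem[OF zY] aS] in auto)
      qed
      have finPT: "finite (supp ?PT)" using PT fsdist_finite by blast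
      have finpa: "finite (supp (p a))" using pa fsdist_finite by blast
      have "h (\<lambda>i\<in>S. if i\<in>insert a T then alg i (p i) else y i)
          = b (Dmap (\<lambda>z. h (\<lambda>i\<in>S. if i\<in>T then z i else y' i)) ?PT)"
        unfolding eq1 by (rule bspec[OF IH y'])
      also have "Dmap (\<lambda>z. h (\<lambda>i\<in>S. if i\<in>T then z i else y' i)) ?PT = Dmap (b \<circ> K) ?PT"
        by (rule Dmap_cong) (use step in auto)
      also have "\<dots> = Dmap b (Dmap K ?PT)" by (rule Dmap_comp[OF finPT, symmetric])
      also have "b \<dots> = b (Dmult (Dmap K ?PT))"
      proof -
        have "Dmap K ?PT \<in> fsdist (fsdist Z)"
          by (rule Dmap_fsdist) (use finPT PT Kmem in \<open>auto simp: fsdist_def\<close>)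
        then show ?thesis using Zc by (simp add: convex_set_def)
      qed
      also have "Dmult (Dmap K ?PT) = Dmap (\<lambda>(z,t). h ((w z)(a:=t))) (pairD ?PT (p a))"
        unfolding K_def by (rule Dmult_Dmap_pair[OF finPT finpa])
      also have "\<dots> = Dmap ((\<lambda>z. h (\<lambda>i\<in>S. if i\<in>insert a T then z i else y i)) \<circ> (\<lambda>(z,t). z(a:=t))) (pairD ?PT (p a))"
        by (rule Dmap_cong) (use aS insert.hyps(2) in \<open>auto simp: w_def intro!: arg_cong[where f=h]\<close>)
      also have "\<dots> = Dmap (\<lambda>z. h (\<lambda>i\<in>S. if i\<in>insert a T then z i else y i)) (Dmap (\<lambda>(z,t). z(a:=t)) (pairD ?PT (p a)))"
        by (rule Dmap_comp[symmetric], rule finite_subset[OF supp_pairD]) (use finPT finpa in auto)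
      also have "Dmap (\<lambda>(z,t). z(a:=t)) (pairD ?PT (p a)) = prod_dist (insert a T) p"
        by (rule prod_dist_insert[symmetric]) (use insert.hyps in auto)
      finally show "h (\<lambda>i\<in>S. if i\<in>insert a T then alg i (p i) else y i)
           = b (Dmap (\<lambda>z. h (\<lambda>i\<in>S. if i\<in>insert a T then z i else y i)) (prod_dist (insert a T) p))" .
    qed
  qed
qed


lemma prod_dist_partition:
  assumes fI: "finite I" and fJ: "finite J" and phiI: "\<forall>i\<in>I. \<phi> i \<in> J"
  shows "Dmap (\<lambda>y. \<lambda>j\<in>J. restrict y {i\<in>I. \<phi> i = j}) (prod_dist I p)
         = prod_dist J (\<lambda>j. prod_dist {i\<in>I. \<phi> i = j} p)"
proof
  fix w
  define S where "S j = {i\<in>I. \<phi> i = j}" for j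
  let ?sp = "\<lambda>y. \<lambda>j\<in>J. restrict y (S j)"
  have finS: "finite (S j)" for j using fI by (simp add: S_def)
  have inj: "inj_on ?sp (extensional I)"
  proof (rule inj_onI)
    fix y y' assume y: "y \<in> extensional I" and y': "y' \<in> extensional I" and eq: "?sp y = ?sp y'"
    show "y = y'"
    proof
      fix i show "y i = y' i"
      proof (cases "i \<in> I")
        case True
        then have "\<phi> i \<in> J" using phiI by auto
        then have "restrict y (S (\<phi> i)) i = restrict y' (S (\<phi> i)) i"
          using fun_cong[OF eq, of "\<phi> i"] by simp
        then show ?thesis using True by (simp add: S_def)
      next
        case False then show ?thesis using y y' by (simp add: extensional_def)
      qed
    qed
  qed
  have key: "Dmap ?sp (prod_dist I p) w = prod_dist J (\<lambda>j. prod_dist (S j) p) w"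
  proof (cases "w \<in> ?sp ` extensional I")
    case True
    then obtain y where y: "y \<in> extensional I" and wy: "w = ?sp y" by blast
    have "Dmap ?sp (prod_dist I p) w = prod_dist I p y"
      unfolding wy by (rule Dmap_inj[OF supp_prod_dist_ext inj y])
    also have "\<dots> = (\<Prod>i\<in>I. p i (y i))" using y by (simp add: prod_dist_def)
    also have "\<dots> = (\<Prod>j\<in>J. \<Prod>i\<in>{x. x \<in> I \<and> \<phi> x = j}. p i (y i))"
      by (rule prod.group[symmetric]) (use fI fJ phiI in auto)
    also have "\<dots> = prod_dist J (\<lambda>j. prod_dist (S j) p) w"
      unfolding wy prod_dist_def
      by (auto simp: S_def extensional_def intro!: prod.cong)
    finally show ?thesis .
  next
    case False
    have L: "Dmap ?sp (prod_dist I p) w = 0"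
      by (rule Dmap_notin[OF supp_prod_dist_ext False])
    show ?thesis
    proof (cases "w \<in> extensional J \<and> (\<forall>j\<in>J. w j \<in> extensional (S j))")
      case True
      define y where "y = (\<lambda>i\<in>I. w (\<phi> i) i)"
      have "w = ?sp y"
      proof
        fix j show "w j = ?sp y j"
        proof (cases "j \<in> J")
          case True
          then have "w j \<in> extensional (S j)" using \<open>w \<in> extensional J \<and> _\<close> by blast
          then show ?thesis using True by (auto simp: y_def S_def extensional_def)
        next
          case False then show ?thesis using \<open>w \<in> extensional J \<and> _\<close> by (simp add: extensional_def)
        qed
      qed
      moreover have "y \<in> extensional I" by (simp add: y_def)
      ultimately show ?thesis using False by blast
    next
      case False
      show ?thesis
      proof (cases "w \<in> extensional J")
        case True
        then obtain j where j: "j \<in> J" "w j \<notin> extensional (S j)" using False by blast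
        have "(\<Prod>j\<in>J. prod_dist (S j) p (w j)) = 0"
          by (rule prod_zero) (use fJ j in \<open>auto simp: prod_dist_def\<close>)
        then show ?thesis using L True by (simp add: prod_dist_def)
      next
        case False then show ?thesis using L by (simp add: prod_dist_def)
      qed
    qed
  qed
  then show "Dmap (\<lambda>y. \<lambda>j\<in>J. restrict y {i\<in>I. \<phi> i = j}) (prod_dist I p) w = prod_dist J (\<lambda>j. prod_dist {i\<in>I. \<phi> i = j} p) w"
    by (simp add: S_def)
qed

lemma if_all_prod:
  assumes "finite J"
  shows "(if \<forall>j\<in>J. P j then (\<Prod>j\<in>J. f j) else 0) = (\<Prod>j\<in>J. if P j then f j else (0::'r::comm_semiring_1))"
proof (cases "\<forall>j\<in>J. P j")
  case True then show ?thesis by (auto intro: prod.cong)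
next
  case False
  then obtain j where "j \<in> J" "\<not> P j" by blast
  then have z0: "(\<Prod>j\<in>J. if P j then f j else (0::'r)) = 0" using assms by (intro prod_zero) auto
  show ?thesis by (subst if_not_P[OF False]) (rule sym, rule z0)
qed

lemma Dmap_prod_dist_product:
  assumes fJ: "finite J" and fr: "\<forall>j\<in>J. finite (supp (r j))"
  shows "Dmap (\<lambda>z. \<lambda>j\<in>J. h j (z j)) (prod_dist J r) = prod_dist J (\<lambda>j. Dmap (h j) (r j))"
proof
  fix w
  let ?S = "PiE J (\<lambda>j. supp (r j))"
  have finS: "finite ?S" using fJ fr by (intro finite_PiE) auto
  have "Dmap (\<lambda>z. \<lambda>j\<in>J. h j (z j)) (prod_dist J r) w
      = (\<Sum>z\<in>?S. if (\<lambda>j\<in>J. h j (z j)) = w then prod_dist J r z else 0)"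
    by (rule Dmap_alt_if[OF finS supp_prod_dist[OF fJ]])
  also have "\<dots> = prod_dist J (\<lambda>j. Dmap (h j) (r j)) w"
  proof (cases "w \<in> extensional J")
    case True
    have "(\<Sum>z\<in>?S. if (\<lambda>j\<in>J. h j (z j)) = w then prod_dist J r z else 0)
        = (\<Sum>z\<in>?S. \<Prod>j\<in>J. if h j (z j) = w j then r j (z j) else 0)"
    proof (intro sum.cong refl)
      fix z assume z: "z \<in> ?S"
      have e: "((\<lambda>j\<in>J. h j (z j)) = w) = (\<forall>j\<in>J. h j (z j) = w j)"
        using True by (auto simp: extensional_def fun_eq_iff)
      have pz: "prod_dist J r z = (\<Prod>j\<in>J. r j (z j))" using z by (simp add: prod_dist_def PiE_def)
        show "(if (\<lambda>j\<in>J. h j (z j)) = w then prod_dist J r z else 0)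
          = (\<Prod>j\<in>J. if h j (z j) = w j then r j (z j) else 0)"
        unfolding e pz by (rule if_all_prod[OF fJ])
    qed
    also have "\<dots> = (\<Prod>j\<in>J. \<Sum>x\<in>supp (r j). if h j x = w j then r j x else 0)"
      by (rule prod_sum_PiE[symmetric]) (use fJ fr in auto)
    also have "\<dots> = (\<Prod>j\<in>J. Dmap (h j) (r j) (w j))"
      by (intro prod.cong refl Dmap_alt_if[symmetric]) (use fr in auto)
    also have "\<dots> = prod_dist J (\<lambda>j. Dmap (h j) (r j)) w"
      using True by (simp add: prod_dist_def)
    finally show ?thesis .
  next
    case False
    then have "\<forall>z. (\<lambda>j\<in>J. h j (z j)) \<noteq> w" by auto
    then show ?thesis using False by (simp add: prod_dist_def)
  qed
  finally show "Dmap (\<lambda>z. \<lambda>j\<in>J. h j (z j)) (prod_dist J r) w = prod_dist J (\<lambda>j. Dmap (h j) (r j)) w" .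
qed

lemma Dmap_g_prod_dist:
  assumes fI: "finite I" and fJ: "finite J" and phiI: "\<forall>i\<in>I. \<phi> i \<in> J"
    and fp: "\<forall>i\<in>I. finite (supp (p i))"
  shows "Dmap (\<lambda>y. \<lambda>j\<in>J. f j (restrict y {i\<in>I. \<phi> i = j})) (prod_dist I p)
         = prod_dist J (\<lambda>j. Dmap (f j) (prod_dist {i\<in>I. \<phi> i = j} p))"
proof -
  let ?sp = "\<lambda>y. \<lambda>j\<in>J. restrict y {i\<in>I. \<phi> i = j}"
  let ?H = "\<lambda>z. \<lambda>j\<in>J. f j (z j)"
  have finP: "finite (supp (prod_dist I p))"
    by (rule finite_subset[OF supp_prod_dist[OF fI]], rule finite_PiE) (use fI fp in auto)
  have "(\<lambda>y. \<lambda>j\<in>J. f j (restrict y {i\<in>I. \<phi> i = j})) = ?H \<circ> ?sp"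
    by (auto simp: fun_eq_iff)
  then have "Dmap (\<lambda>y. \<lambda>j\<in>J. f j (restrict y {i\<in>I. \<phi> i = j})) (prod_dist I p)
      = Dmap ?H (Dmap ?sp (prod_dist I p))" unfolding Dmap_comp[OF finP] by simp
  also have "\<dots> = Dmap ?H (prod_dist J (\<lambda>j. prod_dist {i\<in>I. \<phi> i = j} p))"
    by (subst prod_dist_partition[OF fI fJ phiI]) (rule refl)
  also have "\<dots> = prod_dist J (\<lambda>j. Dmap (f j) (prod_dist {i\<in>I. \<phi> i = j} p))"
  proof (rule Dmap_prod_dist_product[OF fJ], rule ballI)
    fix j
    have "finite {i\<in>I. \<phi> i = j}" using fI by simp
    then show "finite (supp (prod_dist {i\<in>I. \<phi> i = j} p))"
      by (rule finite_subset[OF supp_prod_dist], rule finite_PiE) (use fp in auto)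
  qed
  finally show ?thesis .
qed


lemma tensor_gen_sub:
  assumes fI: "finite I" and Yc: "\<forall>i\<in>I. convex_set (Y i) (alg i)"
  shows "tensor_gen I Y alg \<subseteq> fsdist (PiE I Y) \<times> fsdist (PiE I Y)"
proof
  fix x assume "x \<in> tensor_gen I Y alg"
  then obtain p where x: "x = (delta (\<lambda>i\<in>I. alg i (p i)), prod_dist I p)"
    and p: "\<forall>i\<in>I. p i \<in> fsdist (Y i)"
    unfolding tensor_gen_def by blast
  have "(\<lambda>i\<in>I. alg i (p i)) \<in> PiE I Y" using Yc p by (auto simp: convex_set_def)
  then have "delta (\<lambda>i\<in>I. alg i (p i)) \<in> fsdist (PiE I Y)" by (rule delta_fsdist)
  then show "x \<in> fsdist (PiE I Y) \<times> fsdist (PiE I Y)"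
    using x prod_dist_fsdist[OF fI p] by auto
qed

lemma full_convex_equiv: "convex_equiv (fsdist X) Dmult (fsdist X \<times> fsdist X)"
proof -
  have "equiv (fsdist X) (fsdist X \<times> fsdist X)"
    by (auto simp: equiv_def refl_on_def sym_def trans_def)
  moreover have "(Dmult (Dmap fst p), Dmult (Dmap snd p)) \<in> fsdist X \<times> fsdist X"
    if p: "p \<in> fsdist (fsdist X \<times> fsdist X)" for p
  proof -
    have "Dmap fst p \<in> fsdist (fsdist X)" "Dmap snd p \<in> fsdist (fsdist X)"
      by (rule Dmap_fsdist2[OF p]; auto)+
    then show ?thesis using Dmult_fsdist by blast
  qed
  ultimately show ?thesis unfolding convex_equiv_def by blast
qed

lemma Inter_convex_equiv:
  assumes ne: "\<E> \<noteq> {}" and all: "\<forall>E\<in>\<E>. convex_equiv A a E"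
  shows "convex_equiv A a (\<Inter>\<E>)"
proof -
  obtain E0 where E0: "E0 \<in> \<E>" using ne by blast
  have eqs: "\<forall>E\<in>\<E>. equiv A E" using all by (simp add: convex_equiv_def)
  have sub: "\<Inter>\<E> \<subseteq> A \<times> A" using E0 eqs by (auto simp: equiv_def refl_on_def)
  have "equiv A (\<Inter>\<E>)"
    unfolding equiv_def
  proof (intro conjI)
    show "refl_on A (\<Inter>\<E>)" unfolding refl_on_def using sub eqs by (auto simp: equiv_def refl_on_def)
    show "sym (\<Inter>\<E>)" unfolding sym_def using eqs by (auto simp: equiv_def sym_def)
    show "trans (\<Inter>\<E>)" unfolding trans_def using eqs by (auto simp: equiv_def trans_def)
  qed (rule sub)
  moreover have "(a (Dmap fst p), a (Dmap snd p)) \<in> \<Inter>\<E>" if p: "p \<in> fsdist (\<Inter>\<E>)" for p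
  proof -
    have "p \<in> fsdist E" if "E \<in> \<E>" for E using p that by (auto simp: fsdist_def)
    then show ?thesis using all by (auto simp: convex_equiv_def)
  qed
  ultimately show ?thesis unfolding convex_equiv_def by blast
qed

lemma tensor_rel_convex_equiv:
  assumes fI: "finite I" and Yc: "\<forall>i\<in>I. convex_set (Y i) (alg i)"
  shows "convex_equiv (fsdist (PiE I Y)) Dmult (tensor_rel I Y alg)"
  unfolding tensor_rel_def
  by (rule Inter_convex_equiv) (use full_convex_equiv tensor_gen_sub[OF fI Yc] in auto)

lemma tensor_gen_rel: "tensor_gen I Y alg \<subseteq> tensor_rel I Y alg"
  unfolding tensor_rel_def by blast

lemma tensor_rel_least:
  "convex_equiv (fsdist (PiE I Y)) Dmult K \<Longrightarrow> tensor_gen I Y alg \<subseteq> K \<Longrightarrow> tensor_rel I Y alg \<subseteq> K"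
  unfolding tensor_rel_def by blast

lemma rep_class:
  assumes "equiv A E" "x \<in> A"
  shows "(x, SOME z. z \<in> E``{x}) \<in> E"
proof -
  have "x \<in> E``{x}" using equiv_class_self[OF assms] .
  then have "(SOME z. z \<in> E``{x}) \<in> E``{x}" by (rule someI)
  then show ?thesis by simp
qed

lemma rep_quot:
  assumes "equiv A E" "c \<in> A // E"
  shows "(SOME z. z \<in> c) \<in> c" "(SOME z. z \<in> c) \<in> A" "E``{SOME z. z \<in> c} = c"
proof -
  obtain x where x: "c = E``{x}" "x \<in> A" using assms(2) by (rule quotientE)
  have xr: "(x, SOME z. z \<in> c) \<in> E" using rep_class[OF assms(1) x(2)] x(1) by simp
  show "(SOME z. z \<in> c) \<in> c" using xr x by simp
  show "(SOME z. z \<in> c) \<in> A" using xr assms(1) by (auto simp: equiv_def refl_on_def)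
  show "E``{SOME z. z \<in> c} = c" using xr x assms(1) by (metis equiv_class_eq)
qed

lemma class_as_alg:
  fixes E :: "(('x \<Rightarrow> 'r::comm_semiring_1) \<times> ('x \<Rightarrow> 'r)) set"
  assumes ce: "convex_equiv (fsdist X) Dmult E" and p: "p \<in> fsdist X"
  shows "E``{p} = quot_alg E Dmult (Dmap (\<lambda>y. E``{delta y}) p)"
proof -
  let ?U = "\<lambda>y. E``{delta y}"
  let ?rep = "\<lambda>c. SOME z. z \<in> c"
  have eq: "equiv (fsdist X) E" using ce by (simp add: convex_equiv_def)
  have finp: "finite (supp p)" using p fsdist_finite by blast
  have pX: "supp p \<subseteq> X" using p fsdist_supp by blast
  define Q where "Q = Dmap (\<lambda>y. (delta y :: 'x \<Rightarrow> 'r, ?rep (?U y))) p"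
  have QE: "Q \<in> fsdist E" unfolding Q_def
    by (rule Dmap_fsdist) (use finp p pX rep_class[OF eq delta_fsdist] in \<open>auto simp: fsdist_def\<close>)
  have "(Dmult (Dmap fst Q), Dmult (Dmap snd Q)) \<in> E" using ce QE by (simp add: convex_equiv_def)
  moreover have "Dmap fst Q = Dmap delta p" unfolding Q_def Dmap_comp[OF finp] by (simp add: comp_def)
  moreover have "Dmap snd Q = Dmap ?rep (Dmap ?U p)" unfolding Q_def Dmap_comp[OF finp] by (simp add: comp_def)
  ultimately have "(p, Dmult (Dmap ?rep (Dmap ?U p))) \<in> E" using Dmult_Dmap_delta[OF finp] by simp
  then show ?thesis unfolding quot_alg_def using eq by (metis equiv_class_eq)
qed


lemma Dmap_Dmult':
  assumes "P \<in> fsdist (fsdist X)"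
  shows "Dmap g (Dmult P) = Dmult (Dmap (Dmap g) P)"
  by (rule Dmap_Dmult) (use assms in \<open>auto simp: fsdist_def\<close>)

lemma multi_expand_full:
  assumes fS: "finite S"
    and Yc: "\<forall>i\<in>S. convex_set (Y i) (alg i)"
    and h: "multiconvex S Y alg Z b h"
    and Zc: "convex_set Z b"
    and p: "\<forall>i\<in>S. p i \<in> fsdist (Y i)"
  shows "h (\<lambda>i\<in>S. alg i (p i)) = b (Dmap h (prod_dist S p))"
proof -
  let ?y = "\<lambda>i\<in>S. alg i (p i)"
  have y: "?y \<in> PiE S Y" using Yc p by (auto simp: convex_set_def)
  have "h (\<lambda>i\<in>S. if i\<in>S then alg i (p i) else ?y i)
           = b (Dmap (\<lambda>z. h (\<lambda>i\<in>S. if i\<in>S then z i else ?y i)) (prod_dist S p))"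
    using multi_expand[OF fS Yc h Zc p order_refl] y by blast
  moreover have "(\<lambda>i\<in>S. if i\<in>S then alg i (p i) else ?y i) = ?y" by auto
  moreover have "Dmap (\<lambda>z. h (\<lambda>i\<in>S. if i\<in>S then z i else ?y i)) (prod_dist S p) = Dmap h (prod_dist S p)"
  proof (rule Dmap_cong, rule ballI)
    fix z assume "z \<in> supp (prod_dist S p)"
    then have "z \<in> extensional S" using supp_prod_dist_ext by blast
    then have "(\<lambda>i\<in>S. if i\<in>S then z i else ?y i) = z" by (auto simp: extensional_def)
    then show "h (\<lambda>i\<in>S. if i\<in>S then z i else ?y i) = h z" by simp
  qed
  ultimately show ?thesis by simp
qed

theorem mainTheorem16:
  fixes n m :: nat
    and \<phi> :: "nat \<Rightarrow> nat"
    and X :: "nat \<Rightarrow> 'a set" and algX :: "nat \<Rightarrow> ('a \<Rightarrow> 'r::comm_semiring_1) \<Rightarrow> 'a"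
    and Y :: "nat \<Rightarrow> 'b set" and algY :: "nat \<Rightarrow> ('b \<Rightarrow> 'r) \<Rightarrow> 'b"
    and f :: "nat \<Rightarrow> (nat \<Rightarrow> 'b) \<Rightarrow> 'a"
  assumes semifield: "(0::'r) \<noteq> 1" "\<forall>x::'r. x \<noteq> 0 \<longrightarrow> (\<exists>y. x * y = 1)"
    and phi_surj: "\<phi> ` {1..n} = {1..m}"
    and X_convex: "\<forall>j\<in>{1..m}. convex_set (X j) (algX j)"
    and Y_convex: "\<forall>i\<in>{1..n}. convex_set (Y i) (algY i)"
    and f_multiconvex: "\<forall>j\<in>{1..m}.
          multiconvex {i\<in>{1..n}. \<phi> i = j} Y algY (X j) (algX j) (f j)"
  shows "\<exists>F. convex_map (tensor_carrier {1..n} Y algY) (tensor_alg {1..n} Y algY)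
                        (tensor_carrier {1..m} X algX) (tensor_alg {1..m} X algX) F
           \<and> (\<forall>y\<in>PiE {1..n} Y.
                F (tensor_unit {1..n} Y algY y)
                = tensor_unit {1..m} X algX
                    (\<lambda>j\<in>{1..m}. f j (restrict y {i\<in>{1..n}. \<phi> i = j})))
           \<and> (\<forall>G. convex_map (tensor_carrier {1..n} Y algY) (tensor_alg {1..n} Y algY)
                        (tensor_carrier {1..m} X algX) (tensor_alg {1..m} X algX) G
                  \<and> (\<forall>y\<in>PiE {1..n} Y.
                       G (tensor_unit {1..n} Y algY y)
                       = tensor_unit {1..m} X algX
                           (\<lambda>j\<in>{1..m}. f j (restrict y {i\<in>{1..n}. \<phi> i = j})))
                  \<longrightarrow> (\<forall>t\<in>tensor_carrier {1..n} Y algY. G t = F t))"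
proof -
  let ?I = "{1..n}" and ?J = "{1..m}"
  let ?AY = "fsdist (PiE ?I Y) :: ((nat \<Rightarrow> 'b) \<Rightarrow> 'r) set"
  let ?AX = "fsdist (PiE ?J X) :: ((nat \<Rightarrow> 'a) \<Rightarrow> 'r) set"
  let ?EY = "tensor_rel ?I Y algY" and ?EX = "tensor_rel ?J X algX"
  let ?CY = "tensor_carrier ?I Y algY" and ?CX = "tensor_carrier ?J X algX"
  let ?aY = "tensor_alg ?I Y algY" and ?aX = "tensor_alg ?J X algX"
  let ?UY = "tensor_unit ?I Y algY" and ?UX = "tensor_unit ?J X algX"
  define S where "S j = {i\<in>?I. \<phi> i = j}" for j
  define g where "g y = (\<lambda>j\<in>?J. f j (restrict y {i\<in>?I. \<phi> i = j}))" for y :: "nat \<Rightarrow> 'b"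
  define \<Phi> where "\<Phi> p = ?EX``{Dmap g p}" for p :: "(nat \<Rightarrow> 'b) \<Rightarrow> 'r"
  have ceY: "convex_equiv ?AY Dmult ?EY" by (rule tensor_rel_convex_equiv) (use Y_convex in auto)
  have ceX: "convex_equiv ?AX Dmult ?EX" by (rule tensor_rel_convex_equiv) (use X_convex in auto)
  have eqY: "equiv ?AY ?EY" using ceY by (simp add: convex_equiv_def)
  have eqX: "equiv ?AX ?EX" using ceX by (simp add: convex_equiv_def)
  have CY: "?CY = ?AY // ?EY" by (simp add: tensor_carrier_def)
  have CX: "?CX = ?AX // ?EX" by (simp add: tensor_carrier_def)
  have phiI: "\<forall>i\<in>?I. \<phi> i \<in> ?J" using phi_surj by blast
  have gmem: "g y \<in> PiE ?J X" if y: "y \<in> PiE ?I Y" for y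
  proof -
    have "f j (restrict y {i\<in>?I. \<phi> i = j}) \<in> X j" if j: "j \<in> ?J" for j
    proof -
      have "restrict y {i\<in>?I. \<phi> i = j} \<in> PiE {i\<in>?I. \<phi> i = j} Y"
        using y by (auto simp: PiE_def Pi_def)
      then show ?thesis using f_multiconvex j by (auto simp: multiconvex_def)
    qed
    then show ?thesis by (auto simp: g_def PiE_def Pi_def)
  qed
  have DgAX: "Dmap g p \<in> ?AX" if "p \<in> ?AY" for p
    by (rule Dmap_fsdist2[OF that]) (use gmem in auto)
  define K where "K = {(p, q). p \<in> ?AY \<and> q \<in> ?AY \<and> \<Phi> p = \<Phi> q}"
  have Kce: "convex_equiv ?AY Dmult K"
  proof -
    have "equiv ?AY K" unfolding equiv_def refl_on_def sym_def trans_def K_def by auto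
    moreover have "(Dmult (Dmap fst P), Dmult (Dmap snd P)) \<in> K" if P: "P \<in> fsdist K" for P
    proof -
      have finP: "finite (supp P)" using P fsdist_finite by blast
      have KA: "K \<subseteq> ?AY \<times> ?AY" by (auto simp: K_def)
      have P1: "Dmap fst P \<in> fsdist ?AY" by (rule Dmap_fsdist2[OF P]) (use KA in auto)
      have P2: "Dmap snd P \<in> fsdist ?AY" by (rule Dmap_fsdist2[OF P]) (use KA in auto)
      define Pi where "Pi = Dmap (\<lambda>x. (Dmap g (fst x), Dmap g (snd x))) P"
      have PiE: "Pi \<in> fsdist ?EX" unfolding Pi_def
      proof (rule Dmap_fsdist2[OF P], rule ballI)
        fix x assume "x \<in> K"
        then have "fst x \<in> ?AY" "snd x \<in> ?AY" "\<Phi> (fst x) = \<Phi> (snd x)" by (auto simp: K_def)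
        then show "(Dmap g (fst x), Dmap g (snd x)) \<in> ?EX"
          using eq_equiv_class_iff[OF eqX DgAX DgAX] by (simp add: \<Phi>_def)
      qed
      have "(Dmult (Dmap fst Pi), Dmult (Dmap snd Pi)) \<in> ?EX" using ceX PiE by (simp add: convex_equiv_def)
      moreover have "Dmap fst Pi = Dmap (Dmap g) (Dmap fst P)"
        unfolding Pi_def Dmap_comp[OF finP] by (simp add: comp_def)
      moreover have "Dmap snd Pi = Dmap (Dmap g) (Dmap snd P)"
        unfolding Pi_def Dmap_comp[OF finP] by (simp add: comp_def)
      ultimately have "(Dmap g (Dmult (Dmap fst P)), Dmap g (Dmult (Dmap snd P))) \<in> ?EX"
        unfolding Dmap_Dmult'[OF P1] Dmap_Dmult'[OF P2] by simp
      then have "\<Phi> (Dmult (Dmap fst P)) = \<Phi> (Dmult (Dmap snd P))"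
        unfolding \<Phi>_def using eqX by (metis equiv_class_eq)
      then show ?thesis using Dmult_fsdist[OF P1] Dmult_fsdist[OF P2] by (simp add: K_def)
    qed
    ultimately show ?thesis unfolding convex_equiv_def by blast
  qed
  have Kgen: "tensor_gen ?I Y algY \<subseteq> K"
  proof
    fix x assume x: "x \<in> tensor_gen ?I Y algY"
    then obtain p where xp: "x = (delta (\<lambda>i\<in>?I. algY i (p i)), prod_dist ?I p)"
      and p: "\<forall>i\<in>?I. p i \<in> fsdist (Y i)"
      unfolding tensor_gen_def by blast
    have xA: "x \<in> ?AY \<times> ?AY" using tensor_gen_sub[of ?I Y algY] Y_convex x by auto
    define q where "q j = Dmap (f j) (prod_dist (S j) p)" for j
    have fS: "finite (S j)" for j by (simp add: S_def)
    have q: "\<forall>j\<in>?J. q j \<in> fsdist (X j)"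
    proof
      fix j assume j: "j \<in> ?J"
      have "prod_dist (S j) p \<in> fsdist (PiE (S j) Y)"
        by (rule prod_dist_fsdist[OF fS]) (use p in \<open>auto simp: S_def\<close>)
      then show "q j \<in> fsdist (X j)" unfolding q_def
        by (rule Dmap_fsdist2) (use f_multiconvex j in \<open>auto simp: multiconvex_def S_def\<close>)
    qed
    have gy: "g (\<lambda>i\<in>?I. algY i (p i)) = (\<lambda>j\<in>?J. algX j (q j))"
    proof
      fix j show "g (\<lambda>i\<in>?I. algY i (p i)) j = (\<lambda>j\<in>?J. algX j (q j)) j"
      proof (cases "j \<in> ?J")
        case True
        have r: "restrict (\<lambda>i\<in>?I. algY i (p i)) (S j) = (\<lambda>i\<in>S j. algY i (p i))"
          by (auto simp: S_def)
        have "f j (\<lambda>i\<in>S j. algY i (p i)) = algX j (Dmap (f j) (prod_dist (S j) p))"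
          by (rule multi_expand_full[OF fS]) (use Y_convex f_multiconvex X_convex p True in \<open>auto simp: S_def\<close>)
        then show ?thesis using True r by (simp add: g_def q_def S_def)
      next
        case False
        have "g (\<lambda>i\<in>?I. algY i (p i)) j = undefined" unfolding g_def by (simp only: restrict_def if_not_P[OF False])
        moreover have "(\<lambda>j\<in>?J. algX j (q j)) j = undefined" by (simp only: restrict_def if_not_P[OF False])
        ultimately show ?thesis by simp
      qed
    qed
    have gp: "Dmap g (prod_dist ?I p) = prod_dist ?J q"
      unfolding g_def q_def S_def
      by (rule Dmap_g_prod_dist) (use phiI p in \<open>auto simp: fsdist_def\<close>)
    have "(delta (\<lambda>j\<in>?J. algX j (q j)), prod_dist ?J q) \<in> ?EX"
      using tensor_gen_rel[of ?J X algX] q unfolding tensor_gen_def by blast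
    then have "\<Phi> (delta (\<lambda>i\<in>?I. algY i (p i))) = \<Phi> (prod_dist ?I p)"
      unfolding \<Phi>_def Dmap_delta gy gp using eqX by (metis equiv_class_eq)
    then show "x \<in> K" using xA xp by (simp add: K_def)
  qed
  have EYK: "?EY \<subseteq> K" by (rule tensor_rel_least[OF Kce Kgen])
  define F where "F c = \<Phi> (SOME z. z \<in> c)" for c :: "((nat \<Rightarrow> 'b) \<Rightarrow> 'r) set"
  have Fcls: "F (?EY``{p}) = \<Phi> p" if p: "p \<in> ?AY" for p
    using EYK rep_class[OF eqY p] unfolding F_def K_def by auto
  have Fmem: "F c \<in> ?CX" if c: "c \<in> ?CY" for c
  proof -
    obtain p where "c = ?EY``{p}" "p \<in> ?AY" using c CY by (auto elim: quotientE)
    then show ?thesis using Fcls DgAX CX by (auto simp: \<Phi>_def intro: quotientI)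
  qed
  have Fconv: "F (?aY Q) = ?aX (Dmap F Q)" if Q: "Q \<in> fsdist ?CY" for Q
  proof -
    let ?rY = "\<lambda>c::((nat \<Rightarrow> 'b) \<Rightarrow> 'r) set. SOME z. z \<in> c"
    let ?rX = "\<lambda>c::((nat \<Rightarrow> 'a) \<Rightarrow> 'r) set. SOME z. z \<in> c"
    have finQ: "finite (supp Q)" using Q fsdist_finite by blast
    have QC: "supp Q \<subseteq> ?AY // ?EY" using Q CY fsdist_supp by blast
    have rQ: "Dmap ?rY Q \<in> fsdist ?AY"
      by (rule Dmap_fsdist2[OF Q]) (use rep_quot(2)[OF eqY] CY in auto)
    define a where "a = Dmult (Dmap ?rY Q)"
    have aA: "a \<in> ?AY" unfolding a_def by (rule Dmult_fsdist[OF rQ])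
    have L: "F (?aY Q) = ?EX``{Dmap g a}"
      unfolding tensor_alg_def quot_alg_def a_def[symmetric] using Fcls[OF aA] by (simp add: \<Phi>_def)
    define Pi where "Pi = Dmap (\<lambda>c. (Dmap g (?rY c), ?rX (F c))) Q"
    have PiE: "Pi \<in> fsdist ?EX" unfolding Pi_def
    proof (rule Dmap_fsdist2[OF Q], rule ballI)
      fix c assume c: "c \<in> ?CY"
      have "?rY c \<in> ?AY" using rep_quot(2)[OF eqY] c CY by auto
      then show "(Dmap g (?rY c), ?rX (F c)) \<in> ?EX"
        using rep_class[OF eqX DgAX] by (simp add: F_def \<Phi>_def)
    qed
    have "(Dmult (Dmap fst Pi), Dmult (Dmap snd Pi)) \<in> ?EX" using ceX PiE by (simp add: convex_equiv_def)
    moreover have "Dmap fst Pi = Dmap (Dmap g) (Dmap ?rY Q)"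
      unfolding Pi_def Dmap_comp[OF finQ] by (simp add: comp_def)
    moreover have "Dmap snd Pi = Dmap ?rX (Dmap F Q)"
      unfolding Pi_def Dmap_comp[OF finQ] by (simp add: comp_def)
    ultimately have "(Dmap g a, Dmult (Dmap ?rX (Dmap F Q))) \<in> ?EX"
      unfolding a_def Dmap_Dmult'[OF rQ] by simp
    then have "?EX``{Dmap g a} = ?EX``{Dmult (Dmap ?rX (Dmap F Q))}" using eqX by (metis equiv_class_eq)
    then show ?thesis using L by (simp add: tensor_alg_def quot_alg_def)
  qed
  have Fcm: "convex_map ?CY ?aY ?CX ?aX F"
    unfolding convex_map_def using Fmem Fconv by blast
  have Funit: "\<forall>y\<in>PiE ?I Y. F (?UY y) = ?UX (\<lambda>j\<in>?J. f j (restrict y {i\<in>?I. \<phi> i = j}))"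
  proof
    fix y assume y: "y \<in> PiE ?I Y"
    have "F (?UY y) = \<Phi> (delta y)" unfolding tensor_unit_def by (rule Fcls[OF delta_fsdist[OF y]])
    then show "F (?UY y) = ?UX (\<lambda>j\<in>?J. f j (restrict y {i\<in>?I. \<phi> i = j}))"
      by (simp add: \<Phi>_def Dmap_delta tensor_unit_def g_def)
  qed
  have uniq: "G t = ?aX (Dmap (?UX \<circ> g) p)"
    if G: "convex_map ?CY ?aY ?CX ?aX G" and GU: "\<forall>y\<in>PiE ?I Y. G (?UY y) = ?UX (\<lambda>j\<in>?J. f j (restrict y {i\<in>?I. \<phi> i = j}))"
      and p: "p \<in> ?AY" and t: "t = ?EY``{p}" for G t p
  proof -
    have finp: "finite (supp p)" using p fsdist_finite by blast
    have t2: "t = ?aY (Dmap ?UY p)"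
      unfolding t tensor_alg_def tensor_unit_def by (rule class_as_alg[OF ceY p])
    have UQ: "Dmap ?UY p \<in> fsdist ?CY"
      by (rule Dmap_fsdist2[OF p]) (use CY in \<open>auto simp: tensor_unit_def intro!: quotientI delta_fsdist\<close>)
    have "G t = ?aX (Dmap G (Dmap ?UY p))" using G UQ unfolding t2 convex_map_def by blast
    also have "Dmap G (Dmap ?UY p) = Dmap (G \<circ> ?UY) p" by (rule Dmap_comp[OF finp])
    also have "\<dots> = Dmap (?UX \<circ> g) p"
      by (rule Dmap_cong) (use p GU in \<open>auto simp: fsdist_def g_def\<close>)
    finally show ?thesis .
  qed
  show ?thesis
  proof (intro exI[of _ F] conjI allI impI ballI)
    show "convex_map ?CY ?aY ?CX ?aX F" by (rule Fcm)
    show "\<And>y. y \<in> PiE ?I Y \<Longrightarrow> F (?UY y) = ?UX (\<lambda>j\<in>?J. f j (restrict y {i\<in>?I. \<phi> i = j}))"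
      using Funit by blast
  next
    fix G t
    assume H: "convex_map ?CY ?aY ?CX ?aX G \<and> (\<forall>y\<in>PiE ?I Y. G (?UY y) = ?UX (\<lambda>j\<in>?J. f j (restrict y {i\<in>?I. \<phi> i = j})))"
      and t: "t \<in> ?CY"
    obtain p where p: "t = ?EY``{p}" "p \<in> ?AY" using t CY by (auto elim: quotientE)
    show "G t = F t" using uniq[of G p t] uniq[of F p t] H p Fcm Funit by simp
  qed
qed

end
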